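(* Let $\kappa<0$, $m>0$, and let $L_{\kappa,m}$ be as in the context. Suppose $\delta\in(0,1)$ and $0<\rho_1<\rho_2<\min\{R_{|\kappa|},2m\delta/3\}$. Then with $\beta=\sqrt{1-\delta^2}$ and $A=\sin_\kappa(\rho_2)/\rho_2$, \[\frac{L_{\kappa,m}(\rho_2)}{L_{\kappa,m}(\rho_1)}\ge\frac12\left[\left(\frac{\rho_2}{A\rho_1}\right)^{\beta m}-\left(\frac{\rho_2}{A\rho_1}\right)^{-\beta m}\right].\]
   Context: For $\kappa<0$: $\sin_\kappa(\rho)=\sinh(\sqrt{-\kappa}\rho)/\sqrt{-\kappa}$, $\cos_\kappa=(\sin_\kappa)'$, and $R_{|\kappa|}=\pi/(2\sqrt{|\kappa|})$. $L_{\kappa,m}$ is a solution of \[\sin_\kappa^2(\rho)L''(\rho)+\sin_\kappa(\rho)\cos_\kappa(\rho)L'(\rho)+(\sin_\kappa^2(\rho)-m^2)L(\rho)=0\] that is well defined (regular) at $\rho=0$ and positive on some interval $(0,\varepsilon)$. *)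

theory Defs
  imports "HOL-Analysis.Analysis"
begin

definition sin_k :: "real \<Rightarrow> real \<Rightarrow> real" where
  "sin_k \<kappa> \<rho> = sinh (sqrt (-\<kappa>) * \<rho>) / sqrt (-\<kappa>)"

definition cos_k :: "real \<Rightarrow> real \<Rightarrow> real" where
  "cos_k \<kappa> \<rho> = cosh (sqrt (-\<kappa>) * \<rho>)"

definition R_rad :: "real \<Rightarrow> real" where
  "R_rad c = pi / (2 * sqrt c)"

text \<open>L is an admissible L_{kappa,m}: a twice differentiable solution of the ODE on
  (0, R_{|kappa|}), regular at 0 (it has a finite limit as rho tends to 0 from the right),
  and positive on some interval (0, eps).\<close>
definition is_L :: "real \<Rightarrow> real \<Rightarrow> (real \<Rightarrow> real) \<Rightarrow> bool" where
  "is_L \<kappa> m L \<longleftrightarrow>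
     (\<exists>L' L''. \<forall>\<rho>\<in>{0<..<R_rad \<bar>\<kappa>\<bar>}.
        (L has_real_derivative L' \<rho>) (at \<rho>) \<and>
        (L' has_real_derivative L'' \<rho>) (at \<rho>) \<and>
        (sin_k \<kappa> \<rho>)\<^sup>2 * L'' \<rho> + sin_k \<kappa> \<rho> * cos_k \<kappa> \<rho> * L' \<rho>
          + ((sin_k \<kappa> \<rho>)\<^sup>2 - m\<^sup>2) * L \<rho> = 0) \<and>
     (\<exists>l. (L \<longlongrightarrow> l) (at_right 0)) \<and>
     (\<exists>\<epsilon>>0. \<forall>\<rho>\<in>{0<..<\<epsilon>}. L \<rho> > 0)"

end

theory Submission
  imports Defs
begin


lemma sinh_le_x_cosh: assumes "0 \<le> (x::real)" shows "sinh x \<le> x * cosh x"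
proof -
  have "(\<lambda>z. z * cosh z - sinh z) 0 \<le> (\<lambda>z. z * cosh z - sinh z) x"
  proof (rule DERIV_nonneg_imp_nondecreasing[OF assms])
    fix z :: real assume z: "0 \<le> z" "z \<le> x"
    have "((\<lambda>z. z * cosh z - sinh z) has_real_derivative z * sinh z) (at z)"
      by (auto intro!: derivative_eq_intros)
    then show "\<exists>y. ((\<lambda>z. z * cosh z - sinh z) has_real_derivative y) (at z) \<and> 0 \<le> y"
      using z by auto
  qed
  then show ?thesis by simp
qed

lemma x_le_sinh: assumes "0 \<le> (x::real)" shows "x \<le> sinh x"
proof -
  have "(\<lambda>z. sinh z - z) 0 \<le> (\<lambda>z. sinh z - z) x"
  proof (rule DERIV_nonneg_imp_nondecreasing[OF assms])
    fix z :: real assume z: "0 \<le> z" "z \<le> x"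
    have "((\<lambda>z. sinh z - z) has_real_derivative cosh z - 1) (at z)"
      by (auto intro!: derivative_eq_intros)
    then show "\<exists>y. ((\<lambda>z. sinh z - z) has_real_derivative y) (at z) \<and> 0 \<le> y"
      using cosh_real_ge_1[of z] by auto
  qed
  then show ?thesis by simp
qed

lemma cosh_ge_quad: assumes "0 \<le> (x::real)" shows "1 + x\<^sup>2/2 \<le> cosh x"
proof -
  have "(\<lambda>z. cosh z - 1 - z\<^sup>2/2) 0 \<le> (\<lambda>z. cosh z - 1 - z\<^sup>2/2) x"
  proof (rule DERIV_nonneg_imp_nondecreasing[OF assms])
    fix z :: real assume z: "0 \<le> z" "z \<le> x"
    have "((\<lambda>z. cosh z - 1 - z\<^sup>2/2) has_real_derivative sinh z - z) (at z)"
      by (auto intro!: derivative_eq_intros)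
    then show "\<exists>y. ((\<lambda>z. cosh z - 1 - z\<^sup>2/2) has_real_derivative y) (at z) \<and> 0 \<le> y"
      using x_le_sinh[of z] z by auto
  qed
  then show ?thesis by simp
qed

lemma sinh_div_mono: assumes "0 < (x::real)" "x \<le> y" shows "sinh x / x \<le> sinh y / y"
proof -
  have "(\<lambda>z. sinh z / z) x \<le> (\<lambda>z. sinh z / z) y"
  proof (rule DERIV_nonneg_imp_nondecreasing[OF assms(2)])
    fix z assume z: "x \<le> z" "z \<le> y"
    then have "z > 0" using assms by simp
    have "((\<lambda>z. sinh z / z) has_real_derivative (cosh z * z - sinh z * 1) / (z * z)) (at z)"
      by (rule derivative_eq_intros refl | use \<open>z > 0\<close> in simp)+
    moreover have "0 \<le> (cosh z * z - sinh z * 1) / (z * z)"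
      using sinh_le_x_cosh[of z] \<open>z > 0\<close> by (simp add: mult.commute)
    ultimately show "\<exists>d. ((\<lambda>z. sinh z / z) has_real_derivative d) (at z) \<and> 0 \<le> d"
      by blast
  qed
  then show ?thesis by simp
qed

lemma exp_num: "exp (1.5708::real) \<le> 4.816"
proof -
  define x :: real where "x = 1.5708"
  obtain t where t: "\<bar>t\<bar> \<le> \<bar>x\<bar>" "exp x = (\<Sum>m<8. (x ^ m) / fact m) + (exp t / fact 8) * x ^ 8"
    using Maclaurin_exp_le by blast
  have "exp t \<le> exp x" using t(1) by (simp add: x_def)
  have P: "(\<Sum>m<8. (x ^ m) / fact m) \<le> 4.81"
    by (simp add: x_def numeral_eq_Suc fact_numeral)
  have "x^8 \<le> (1.6::real)^8" unfolding x_def by (rule power_mono) auto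
  also have "\<dots> \<le> 44" by (simp add: power_divide)
  finally have Q: "x^8 / fact 8 \<le> 0.0011" by (simp add: fact_numeral)
  have "(exp t / fact 8) * x^8 = exp t * (x^8/fact 8)" by simp
  also have "\<dots> \<le> exp x * (x^8/fact 8)"
    by (rule mult_right_mono) (use \<open>exp t \<le> exp x\<close> in \<open>auto simp: x_def\<close>)
  also have "\<dots> \<le> exp x * 0.0011" by (rule mult_left_mono) (use Q in auto)
  finally have "exp x \<le> 4.81 + exp x * 0.0011" using t(2) P by linarith
  then show ?thesis unfolding x_def by simp
qed

lemma sinh_pi_half: "sinh (pi/2) \<le> 3 * pi / 4"
proof -
  have "pi/2 \<le> 1.5708" using pi_approx by simp
  then have "sinh (pi/2) \<le> sinh (1.5708::real)" by simp
  also have "\<dots> = (exp 1.5708 - inverse (exp (1.5708::real))) / 2"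
    by (simp add: sinh_field_def exp_minus)
  also have "\<dots> \<le> (4.816 - inverse 4.816) / 2"
  proof -
    have "inverse 4.816 \<le> inverse (exp (1.5708::real))"
      using exp_num by (intro le_imp_inverse_le) auto
    then show ?thesis using exp_num by simp
  qed
  also have "\<dots> \<le> 3 * pi / 4" using pi_approx by simp
  finally show ?thesis .
qed

lemma sinh_bound: assumes "0 < (x::real)" "x \<le> pi/2" shows "sinh x \<le> 3/2 * x"
proof -
  have "sinh x / x \<le> sinh (pi/2) / (pi/2)" by (rule sinh_div_mono[OF assms])
  also have "\<dots> \<le> (3*pi/4) / (pi/2)" by (intro divide_right_mono sinh_pi_half) simp
  also have "\<dots> = 3/2" by simp
  finally show ?thesis using assms by (simp add: divide_le_eq mult.commute)
qed

lemma tanh_half_le: assumes "0 \<le> (y::real)" shows "sinh y / (cosh y + 1) \<le> y / 2"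
proof -
  define z where "z = y/2"
  have yz: "y = 2*z" by (simp add: z_def)
  have "sinh y = 2 * sinh z * cosh z" unfolding yz by (rule sinh_double)
  moreover have "cosh y + 1 = 2 * cosh z * cosh z"
    unfolding yz cosh_double using cosh_square_eq[of z] by (simp add: power2_eq_square)
  ultimately have "sinh y / (cosh y + 1) = sinh z / cosh z" by simp
  also have "\<dots> \<le> z" using sinh_le_x_cosh[of z] assms by (simp add: z_def divide_le_eq)
  finally show ?thesis by (simp add: z_def)
qed

lemma tanh_half_ge: assumes "0 < (y::real)" shows "y\<^sup>2 / (2 * sinh y) \<le> sinh y / (cosh y + 1)"
proof -
  have s: "sinh y > 0" using assms by simp
  have c: "y\<^sup>2 \<le> 2 * (cosh y - 1)" using cosh_ge_quad[of y] assms by simp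
  have "y\<^sup>2 * (cosh y + 1) \<le> 2 * (cosh y - 1) * (cosh y + 1)"
    by (rule mult_right_mono[OF c]) (use cosh_real_ge_1[of y] in simp)
  also have "\<dots> = 2 * (sinh y)\<^sup>2" using sinh_square_eq[of y] by (simp add: algebra_simps power2_eq_square)
  finally have "y\<^sup>2 * (cosh y + 1) \<le> 2 * (sinh y)\<^sup>2" .
  then show ?thesis using s cosh_real_ge_1[of y]
    by (simp add: divide_simps power2_eq_square)
qed



lemma core:
  fixes a m k l \<epsilon> R \<rho>1 \<rho>2 :: real and L L' L'' :: "real \<Rightarrow> real"
  assumes a: "a > 0" and k: "k > 0"
  and hyps: "\<forall>x\<in>{0<..<R}. (L has_real_derivative L' x) (at x) \<and> (L' has_real_derivative L'' x) (at x) \<and>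
      (sinh (a*x)/a)\<^sup>2 * L'' x + sinh (a*x)/a * cosh (a*x) * L' x + ((sinh (a*x)/a)\<^sup>2 - m\<^sup>2) * L x = 0"
  and R: "\<rho>2 < R"
  and gap: "\<forall>x\<in>{0<..\<rho>2}. k\<^sup>2 \<le> m\<^sup>2 - (sinh (a*x)/a)\<^sup>2"
  and bnd: "\<forall>x\<in>{0<..\<rho>2}. sinh (a*x)/a \<le> 3/2 * x"
  and lim: "(L \<longlongrightarrow> l) (at_right 0)" and eps: "\<epsilon> > 0" "\<forall>x\<in>{0<..<\<epsilon>}. L x > 0"
  and r1: "0 < \<rho>1" and r12: "\<rho>1 < \<rho>2"
  shows "L \<rho>1 > 0 \<and> L \<rho>2 \<ge> L \<rho>1 * cosh (k * ((ln (sinh (a*\<rho>2)) - ln (cosh (a*\<rho>2) + 1))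
                                     - (ln (sinh (a*\<rho>1)) - ln (cosh (a*\<rho>1) + 1))))"
proof -
  define S where "S = (\<lambda>x. sinh (a*x)/a)"
  define p where "p = (\<lambda>x. S x * L' x)"
  have Spos: "S x > 0" if "x > 0" for x using a that by (simp add: S_def)
  have dS: "(S has_real_derivative cosh (a*x)) (at x)" for x
    unfolding S_def using a by (auto intro!: derivative_eq_intros)
  have dL: "(L has_real_derivative L' x) (at x)" and dL': "(L' has_real_derivative L'' x) (at x)"
    and ode: "(S x)\<^sup>2 * L'' x + S x * cosh (a*x) * L' x + ((S x)\<^sup>2 - m\<^sup>2) * L x = 0"
    if "0 < x" "x < R" for x using hyps that unfolding S_def by auto
  have dp: "(p has_real_derivative (m\<^sup>2 - (S x)\<^sup>2) * L x / S x) (at x)" if "0 < x" "x < R" for x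
  proof -
    have "(p has_real_derivative cosh (a*x) * L' x + L'' x * S x) (at x)"
      unfolding p_def by (rule DERIV_mult[OF dS dL'[OF that]])
    moreover have "cosh (a*x) * L' x + L'' x * S x = (m\<^sup>2 - (S x)\<^sup>2) * L x / S x"
      using ode[OF that] Spos[OF that(1)]
      by (simp add: field_simps power2_eq_square)
    ultimately show ?thesis by simp
  qed
  have gap': "k\<^sup>2 \<le> m\<^sup>2 - (S x)\<^sup>2" if "0 < x" "x \<le> \<rho>2" for x using gap that by (simp add: S_def)
  have bnd': "S x \<le> 3/2 * x" if "0 < x" "x \<le> \<rho>2" for x using bnd that by (simp add: S_def)
  have Lp_mono: "L x * p x \<le> L y * p y" if "0 < x" "x \<le> y" "y \<le> \<rho>2" for x y
  proof (rule DERIV_nonneg_imp_nondecreasing[OF that(2)])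
    fix z assume z: "x \<le> z" "z \<le> y"
    then have z0: "0 < z" "z < R" "z \<le> \<rho>2" using that R by auto
    have "((\<lambda>z. L z * p z) has_real_derivative L' z * p z + ((m\<^sup>2 - (S z)\<^sup>2) * L z / S z) * L z) (at z)"
      by (rule DERIV_mult[OF dL dp]) (use z0 in auto)
    moreover have "0 \<le> L' z * p z + ((m\<^sup>2 - (S z)\<^sup>2) * L z / S z) * L z"
    proof -
      have "0 \<le> m\<^sup>2 - (S z)\<^sup>2" using gap'[of z] z0 zero_le_power2[of k] by linarith
      then have "0 \<le> (m\<^sup>2 - (S z)\<^sup>2) * (L z * L z) / S z" using Spos[of z] z0 by simp
      moreover have "0 \<le> L' z * p z"
      proof -
        have e: "L' z * p z = S z * (L' z * L' z)" unfolding p_def by simp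
        have "0 \<le> S z * (L' z * L' z)" using Spos[of z] z0 by simp
        then show ?thesis using e by linarith
      qed
      ultimately show ?thesis by (simp add: algebra_simps)
    qed
    ultimately show "\<exists>d. ((\<lambda>z. L z * p z) has_real_derivative d) (at z) \<and> 0 \<le> d" by blast
  qed
  obtain d where d: "d > 0" "\<And>y. 0 < y \<Longrightarrow> y < d \<Longrightarrow> dist (L y) l < 1"
  proof -
    have "eventually (\<lambda>y. dist (L y) l < 1) (at_right 0)" using lim by (rule tendstoD) simp
    then obtain b where "b > 0" "\<forall>y>0. y < b \<longrightarrow> dist (L y) l < 1"
      unfolding eventually_at_right_field by auto
    then show ?thesis using that by auto
  qed
  define M where "M = \<bar>l\<bar> + 1"
  have M: "M > 0" "\<And>y. 0 < y \<Longrightarrow> y < d \<Longrightarrow> L y \<le> M"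
    unfolding M_def using d(2) by (force simp: dist_real_def abs_less_iff)+
  have Lp_nonneg: "L x0 * p x0 \<ge> 0" if x0: "0 < x0" "x0 \<le> \<rho>2" for x0
  proof (rule ccontr)
    assume neg: "\<not> ?thesis"
    define c' where "c' = - (L x0 * p x0)"
    have c': "c' > 0" using neg by (simp add: c'_def)
    define c where "c = c' / M"
    have c: "c > 0" using c' M by (simp add: c_def)
    define r where "r = min x0 (min d \<epsilon>) / 2"
    have r: "0 < r" "r < x0" "r < d" "r < \<epsilon>" using x0 d eps by (auto simp: r_def)
    have pneg: "p y \<le> - c" if y: "0 < y" "y \<le> r" for y
    proof -
      have Ly: "L y > 0" "L y \<le> M" using eps M y r by auto
      have "L y * p y \<le> L x0 * p x0" using Lp_mono[of y x0] y r x0 by simp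
      then have "L y * p y \<le> - c'" by (simp add: c'_def)
      then have "p y \<le> - c' / L y" using Ly by (simp add: field_simps)
      also have "\<dots> \<le> - c' / M" using Ly c' by (simp add: frac_le divide_le_cancel)
      finally show ?thesis by (simp add: c_def)
    qed
    define g where "g = (\<lambda>y. - (L y + (2*c/3) * ln y))"
    have g_mono: "g y \<le> g r" if y: "0 < y" "y \<le> r" for y
    proof (rule DERIV_nonneg_imp_nondecreasing[OF y(2)])
      fix z assume z: "y \<le> z" "z \<le> r"
      then have z0: "0 < z" "z < R" "z \<le> \<rho>2" using y r x0 R by auto
      have "(g has_real_derivative - (L' z + (2*c/3) * (1 / z))) (at z)"
        unfolding g_def by (rule derivative_eq_intros dL refl | use z0 in simp)+
      moreover have "0 \<le> - (L' z + (2*c/3) * (1 / z))"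
      proof -
        have Sz: "0 < S z" "S z \<le> 3/2 * z" using Spos bnd' z0 by auto
        have "L' z = p z / S z" using Sz by (simp add: p_def)
        also have "\<dots> \<le> - c / S z"
        proof -
          have "p z \<le> - c" using pneg z0 z by auto
          from divide_right_mono[OF this less_imp_le[OF Sz(1)]] show ?thesis by simp
        qed
        also have "\<dots> \<le> - c / (3/2 * z)"
        proof -
          have "c / (3/2*z) \<le> c / S z" by (rule divide_left_mono) (use Sz c z0 in auto)
          then show ?thesis by simp
        qed
        also have "\<dots> = - ((2*c/3) * (1 / z))" by simp
        finally show ?thesis by simp
      qed
      ultimately show "\<exists>d. (g has_real_derivative d) (at z) \<and> 0 \<le> d" by blast
    qed
    define B where "B = 3 * (M + g r) / (2*c) + 1"
    define y where "y = min r (exp (- B))"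
    have y: "0 < y" "y \<le> r" "y < d" "y < \<epsilon>" using r by (auto simp: y_def)
    have "y \<le> exp (- B)" by (simp add: y_def)
    then have "ln y \<le> - B" using y(1) by (metis ln_exp ln_le_cancel_iff exp_gt_zero)
    then have "(2*c/3) * B \<le> (2*c/3) * (- ln y)" using c by (intro mult_left_mono) auto
    moreover have "(2*c/3) * B = M + g r + 2*c/3" using c by (simp add: B_def field_simps)
    moreover have "- (L y + (2*c/3) * ln y) \<le> g r" using g_mono[OF y(1,2)] by (simp add: g_def)
    moreover have "L y \<le> M" using M y by auto
    ultimately show False using c by (simp add: algebra_simps)
  qed
  have L2_mono: "L x * L x \<le> L y * L y" if "0 < x" "x \<le> y" "y \<le> \<rho>2" for x y
  proof (rule DERIV_nonneg_imp_nondecreasing[OF that(2)])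
    fix z assume z: "x \<le> z" "z \<le> y"
    then have z0: "0 < z" "z < R" "z \<le> \<rho>2" using that R by auto
    have "((\<lambda>z. L z * L z) has_real_derivative L' z * L z + L' z * L z) (at z)"
      by (rule DERIV_mult[OF dL dL]) (use z0 in auto)
    moreover have "0 \<le> L' z * L z + L' z * L z"
    proof -
      have "L' z * L z = (L z * p z) / S z" using Spos[of z] z0 by (simp add: p_def)
      moreover have "0 \<le> (L z * p z) / S z" using Lp_nonneg[of z] Spos[of z] z0 by simp
      ultimately show ?thesis by simp
    qed
    ultimately show "\<exists>d. ((\<lambda>z. L z * L z) has_real_derivative d) (at z) \<and> 0 \<le> d" by blast
  qed
  define ra where "ra = min \<epsilon> \<rho>1 / 2"
  have ra: "0 < ra" "ra < \<epsilon>" "ra < \<rho>1" using eps r1 by (auto simp: ra_def)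
  have Lra: "L ra > 0" using eps ra by auto
  have Lpos: "L x > 0" if x: "ra \<le> x" "x \<le> \<rho>2" for x
  proof (rule ccontr)
    assume "\<not> L x > 0"
    then have Lx: "L x \<le> 0" by simp
    have cont: "\<forall>t. ra \<le> t \<and> t \<le> x \<longrightarrow> isCont L t"
    proof (intro allI impI)
      fix t assume "ra \<le> t \<and> t \<le> x"
      then have "0 < t" "t < R" using ra x R by auto
      then show "isCont L t" by (rule DERIV_isCont[OF dL])
    qed
    obtain z where z: "ra \<le> z" "z \<le> x" "L z = 0"
      using IVT2[of L x 0 ra, OF Lx less_imp_le[OF Lra] x(1) cont] by blast
    have "L ra * L ra \<le> L z * L z" using L2_mono[of ra z] z x ra by simp
    moreover have "0 < L ra * L ra" using Lra by simp
    ultimately show False using z by simp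
  qed
  have p1: "p \<rho>1 \<ge> 0"
  proof -
    have "L \<rho>1 * p \<rho>1 \<ge> 0" using Lp_nonneg r1 r12 by simp
    moreover have "L \<rho>1 > 0" using Lpos ra r12 by simp
    ultimately show ?thesis by (simp add: zero_le_mult_iff)
  qed
  define T where "T = (\<lambda>x. ln (sinh (a*x)) - ln (cosh (a*x) + 1))"
  have dT: "(T has_real_derivative 1 / S x) (at x)" if "0 < x" for x
  proof -
    have sp: "sinh (a*x) > 0" using a that by simp
    have cp: "cosh (a*x) + 1 > 0" using cosh_real_pos[of "a*x"] by linarith
    have "(T has_real_derivative (cosh (a*x) * a) / sinh (a*x) - (sinh (a*x) * a) / (cosh (a*x) + 1)) (at x)"
      unfolding T_def by (rule derivative_eq_intros refl | use sp cp in simp)+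
    moreover have "(cosh (a*x) * a) / sinh (a*x) - (sinh (a*x) * a) / (cosh (a*x) + 1) = 1 / S x"
    proof -
      have "(cosh (a*x) * a) / sinh (a*x) - (sinh (a*x) * a) / (cosh (a*x) + 1)
          = a * (cosh (a*x) * cosh (a*x) + cosh (a*x) - sinh (a*x) * sinh (a*x)) / (sinh (a*x) * (cosh (a*x) + 1))"
      proof -
        have gen: "(c * a) / s' - (s' * a) / (c + 1) = a * (c * c + c - s' * s') / (s' * (c + 1))"
          if "s' > 0" "c + 1 > 0" for c s' :: real
          using that by (simp add: divide_simps) (simp add: algebra_simps)
        show ?thesis by (rule gen[OF sp cp])
      qed
      also have "\<dots> = a * (cosh (a*x) + 1) / (sinh (a*x) * (cosh (a*x) + 1))"
      proof -
        have num: "cosh (a*x) * cosh (a*x) + cosh (a*x) - sinh (a*x) * sinh (a*x) = cosh (a*x) + 1"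
          using cosh_square_eq[of "a*x"] by (simp add: power2_eq_square)
        show ?thesis by (simp only: num)
      qed
      also have "\<dots> = a / sinh (a*x)" using cp by simp
      also have "\<dots> = 1 / S x" using sp a by (simp add: S_def)
      finally show ?thesis .
    qed
    ultimately show ?thesis by simp
  qed
  define Cf where "Cf = (\<lambda>x. cosh (k * (T x - T \<rho>1)))"
  define Q where "Q = (\<lambda>x. k * sinh (k * (T x - T \<rho>1)))"
  define W where "W = (\<lambda>x. p x * Cf x - L x * Q x)"
  have dCf: "(Cf has_real_derivative sinh (k * (T x - T \<rho>1)) * (k * (1 / S x))) (at x)" if "0 < x" for x
    unfolding Cf_def by (rule derivative_eq_intros dT[OF that] refl | simp)+
  have dQ: "(Q has_real_derivative k * (cosh (k * (T x - T \<rho>1)) * (k * (1 / S x)))) (at x)" if "0 < x" for x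
    unfolding Q_def by (rule derivative_eq_intros dT[OF that] refl | simp)+
  have Cfpos: "Cf x > 0" for x by (simp add: Cf_def)
  have W_mono: "W \<rho>1 \<le> W x" if x: "\<rho>1 \<le> x" "x \<le> \<rho>2" for x
  proof (rule DERIV_nonneg_imp_nondecreasing[OF x(1)])
    fix z assume z: "\<rho>1 \<le> z" "z \<le> x"
    then have z0: "0 < z" "z < R" "z \<le> \<rho>2" "ra \<le> z" using x r1 R ra by auto
    have "(W has_real_derivative ((m\<^sup>2 - (S z)\<^sup>2) * L z / S z * Cf z + sinh (k * (T z - T \<rho>1)) * (k * (1 / S z)) * p z)
          - (L' z * Q z + k * (cosh (k * (T z - T \<rho>1)) * (k * (1 / S z))) * L z)) (at z)"
      unfolding W_def by (rule DERIV_diff DERIV_mult dp dCf dL dQ | use z0 in simp)+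
    moreover have "0 \<le> ((m\<^sup>2 - (S z)\<^sup>2) * L z / S z * Cf z + sinh (k * (T z - T \<rho>1)) * (k * (1 / S z)) * p z)
          - (L' z * Q z + k * (cosh (k * (T z - T \<rho>1)) * (k * (1 / S z))) * L z)"
    proof -
      have Sz: "S z > 0" using Spos z0 by simp
      have e1: "sinh (k * (T z - T \<rho>1)) * (k * (1 / S z)) * p z = L' z * Q z"
        using Sz by (simp add: p_def Q_def)
      have e2: "k * (cosh (k * (T z - T \<rho>1)) * (k * (1 / S z))) * L z = k\<^sup>2 * L z / S z * Cf z"
        by (simp add: Cf_def power2_eq_square)
      have "0 \<le> (m\<^sup>2 - (S z)\<^sup>2 - k\<^sup>2) * L z / S z * Cf z"
        using gap'[of z] z0 Sz Lpos[of z] Cfpos[of z] by simp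
      then show ?thesis unfolding e1 e2 by (simp add: algebra_simps diff_divide_distrib add_divide_distrib)
    qed
    ultimately show "\<exists>d. (W has_real_derivative d) (at z) \<and> 0 \<le> d" by blast
  qed
  have W1: "W \<rho>1 = p \<rho>1" by (simp add: W_def Cf_def Q_def)
  have F_mono: "L \<rho>1 / Cf \<rho>1 \<le> L \<rho>2 / Cf \<rho>2"
  proof (rule DERIV_nonneg_imp_nondecreasing[of \<rho>1 \<rho>2 "\<lambda>x. L x / Cf x"])
    show "\<rho>1 \<le> \<rho>2" using r12 by simp
    fix z assume z: "\<rho>1 \<le> z" "z \<le> \<rho>2"
    then have z0: "0 < z" "z < R" using r1 R by auto
    have "((\<lambda>x. L x / Cf x) has_real_derivative
        (L' z * Cf z - L z * (sinh (k * (T z - T \<rho>1)) * (k * (1 / S z)))) / (Cf z * Cf z)) (at z)"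
      by (rule DERIV_divide dL dCf | use z0 Cfpos[of z] in simp)+
    moreover have "0 \<le> (L' z * Cf z - L z * (sinh (k * (T z - T \<rho>1)) * (k * (1 / S z)))) / (Cf z * Cf z)"
    proof -
      have Sz: "S z > 0" using Spos z0 by simp
      have "L' z * Cf z - L z * (sinh (k * (T z - T \<rho>1)) * (k * (1 / S z))) = W z / S z"
        using Sz by (simp add: W_def p_def Q_def field_simps)
      moreover have "W z \<ge> 0" using W_mono[of z] z W1 p1 by simp
      ultimately show ?thesis using Sz by simp
    qed
    ultimately show "\<exists>d. ((\<lambda>x. L x / Cf x) has_real_derivative d) (at z) \<and> 0 \<le> d" by blast
  qed
  have L1pos: "L \<rho>1 > 0" using Lpos ra r12 by simp
  have "Cf \<rho>1 = 1" by (simp add: Cf_def)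
  then have "L \<rho>1 * Cf \<rho>2 \<le> L \<rho>2" using F_mono Cfpos[of \<rho>2] by (simp add: le_divide_eq)
  then show ?thesis using L1pos by (simp add: Cf_def T_def)
qed



theorem mainTheorem5:
  fixes \<kappa> m \<delta> \<rho>1 \<rho>2 :: real and L :: "real \<Rightarrow> real"
  assumes "\<kappa> < 0" and "m > 0" and "is_L \<kappa> m L"
    and "0 < \<delta>" and "\<delta> < 1"
    and "0 < \<rho>1" and "\<rho>1 < \<rho>2" and "\<rho>2 < min (R_rad \<bar>\<kappa>\<bar>) (2 * m * \<delta> / 3)"
  shows "let \<beta> = sqrt (1 - \<delta>\<^sup>2); A = sin_k \<kappa> \<rho>2 / \<rho>2 in
    L \<rho>2 / L \<rho>1 \<ge> (1/2) * ((\<rho>2 / (A * \<rho>1)) powr (\<beta> * m) - (\<rho>2 / (A * \<rho>1)) powr (- \<beta> * m))"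
proof -
  note kap = assms(1) and m = assms(2) and d = assms(4,5) and r = assms(6,7,8)
  obtain L' L'' where H: "\<forall>\<rho>\<in>{0<..<R_rad \<bar>\<kappa>\<bar>}.
        (L has_real_derivative L' \<rho>) (at \<rho>) \<and>
        (L' has_real_derivative L'' \<rho>) (at \<rho>) \<and>
        (sin_k \<kappa> \<rho>)\<^sup>2 * L'' \<rho> + sin_k \<kappa> \<rho> * cos_k \<kappa> \<rho> * L' \<rho>
          + ((sin_k \<kappa> \<rho>)\<^sup>2 - m\<^sup>2) * L \<rho> = 0"
    and lim0: "\<exists>l. (L \<longlongrightarrow> l) (at_right 0)" and eps0: "\<exists>\<epsilon>>0. \<forall>\<rho>\<in>{0<..<\<epsilon>}. L \<rho> > 0"
    using assms(3) unfolding is_L_def by blast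
  obtain l where lim: "(L \<longlongrightarrow> l) (at_right 0)" using lim0 by blast
  obtain \<epsilon> where eps: "\<epsilon> > 0" "\<forall>\<rho>\<in>{0<..<\<epsilon>}. L \<rho> > 0" using eps0 by blast
  define a where "a = sqrt (- \<kappa>)"
  have a: "a > 0" using kap by (simp add: a_def)
  define R where "R = pi / (2 * a)"
  have RR: "R_rad \<bar>\<kappa>\<bar> = R" using kap by (simp add: R_rad_def R_def a_def)
  have sk: "sin_k \<kappa> x = sinh (a*x)/a" for x by (simp add: sin_k_def a_def)
  have ck: "cos_k \<kappa> x = cosh (a*x)" for x by (simp add: cos_k_def a_def)
  define \<beta> where "\<beta> = sqrt (1 - \<delta>\<^sup>2)"
  define k where "k = \<beta> * m"
  have dd: "\<delta>\<^sup>2 < 1" using d by (simp add: power_less_one_iff)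
  have \<beta>: "\<beta> > 0" "\<beta>\<^sup>2 = 1 - \<delta>\<^sup>2" using dd by (auto simp: \<beta>_def)
  have k: "k > 0" using \<beta> m by (simp add: k_def)
  have r2R: "\<rho>2 < R" using r RR by simp
  have bnd: "\<forall>x\<in>{0<..\<rho>2}. sinh (a*x)/a \<le> 3/2 * x"
  proof
    fix x assume x: "x \<in> {0<..\<rho>2}"
    have "a * x \<le> pi/2"
    proof -
      have "a * x \<le> a * R" using x r2R a by (intro mult_left_mono) auto
      also have "\<dots> = pi/2" using a by (simp add: R_def)
      finally show ?thesis .
    qed
    then have "sinh (a*x) \<le> 3/2 * (a*x)" using x a by (intro sinh_bound) auto
    then show "sinh (a*x)/a \<le> 3/2 * x" using a by (simp add: divide_le_eq mult.commute)
  qed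
  have gap: "\<forall>x\<in>{0<..\<rho>2}. k\<^sup>2 \<le> m\<^sup>2 - (sinh (a*x)/a)\<^sup>2"
  proof
    fix x assume x: "x \<in> {0<..\<rho>2}"
    have s0: "0 \<le> sinh (a*x)/a" using a x by simp
    have "sinh (a*x)/a \<le> 3/2 * x" using bnd x by blast
    also have "\<dots> < m * \<delta>" using x r by simp
    finally have "(sinh (a*x)/a)\<^sup>2 \<le> (m*\<delta>)\<^sup>2" using s0 by (intro power_mono) auto
    then show "k\<^sup>2 \<le> m\<^sup>2 - (sinh (a*x)/a)\<^sup>2"
      by (simp add: k_def power_mult_distrib \<beta>(2) algebra_simps)
  qed
  have hyps: "\<forall>x\<in>{0<..<R}. (L has_real_derivative L' x) (at x) \<and> (L' has_real_derivative L'' x) (at x) \<and>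
      (sinh (a*x)/a)\<^sup>2 * L'' x + sinh (a*x)/a * cosh (a*x) * L' x + ((sinh (a*x)/a)\<^sup>2 - m\<^sup>2) * L x = 0"
    using H unfolding RR sk ck .
  from core[OF a k hyps r2R gap bnd lim eps r(1) r(2)]
  have L1: "L \<rho>1 > 0" and main: "L \<rho>1 * cosh (k * ((ln (sinh (a*\<rho>2)) - ln (cosh (a*\<rho>2) + 1))
                                     - (ln (sinh (a*\<rho>1)) - ln (cosh (a*\<rho>1) + 1)))) \<le> L \<rho>2"
    by auto
  define D where "D = (ln (sinh (a*\<rho>2)) - ln (cosh (a*\<rho>2) + 1)) - (ln (sinh (a*\<rho>1)) - ln (cosh (a*\<rho>1) + 1))"
  define A where "A = sin_k \<kappa> \<rho>2 / \<rho>2"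
  define X where "X = \<rho>2 / (A * \<rho>1)"
  have A: "A = sinh (a*\<rho>2) / (a*\<rho>2)" by (simp add: A_def sk)
  have Xpos: "X > 0" using a r by (simp add: X_def A)
  have lnX: "ln X \<le> D"
  proof -
    define x1 where "x1 = a*\<rho>1"
    define x2 where "x2 = a*\<rho>2"
    have x: "x1 > 0" "x2 > 0" using a r by (auto simp: x1_def x2_def)
    define t1 where "t1 = sinh x1 / (cosh x1 + 1)"
    define t2 where "t2 = sinh x2 / (cosh x2 + 1)"
    have cp: "cosh x1 + 1 > 0" "cosh x2 + 1 > 0" using cosh_real_pos[of x1] cosh_real_pos[of x2] by linarith+
    have t1: "0 < t1" "t1 \<le> x1/2" using x cp tanh_half_le[of x1] by (auto simp: t1_def)
    have t2: "x2\<^sup>2 / (2 * sinh x2) \<le> t2" using tanh_half_ge[of x2] x by (simp add: t2_def)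
    have XX: "X = (x2\<^sup>2 / (2 * sinh x2)) / (x1/2)"
      using a r x by (simp add: X_def A x1_def x2_def field_simps power2_eq_square)
    have "X \<le> t2 / (x1/2)" unfolding XX using x t2 by (intro divide_right_mono) auto
    also have "\<dots> \<le> t2 / t1" using t1 t2 x by (intro divide_left_mono) (auto intro: order_trans[OF _ t2])
    finally have "X \<le> t2 / t1" .
    then have "ln X \<le> ln (t2 / t1)" using Xpos by simp
    also have "\<dots> = D"
    proof -
      have t2p: "t2 > 0" using x cp by (simp add: t2_def)
      have e0: "ln (t2/t1) = ln t2 - ln t1" using t1 t2p by (simp add: ln_div)
      have e1: "ln t1 = ln (sinh x1) - ln (cosh x1 + 1)" unfolding t1_def using x cp by (simp add: ln_div)
      have e2: "ln t2 = ln (sinh x2) - ln (cosh x2 + 1)" unfolding t2_def using x cp by (simp add: ln_div)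
      show ?thesis unfolding e0 e1 e2 D_def x1_def x2_def ..
    qed
    finally show ?thesis .
  qed
  have "sinh (k * ln X) \<le> sinh (k * D)" using lnX k by simp
  also have "\<dots> \<le> cosh (k * D)" by (rule sinh_le_cosh_real)
  also have "\<dots> \<le> L \<rho>2 / L \<rho>1" using main L1 by (simp add: D_def le_divide_eq mult.commute)
  finally have fin: "sinh (k * ln X) \<le> L \<rho>2 / L \<rho>1" .
  have "sinh (k * ln X) = (1/2) * (X powr (\<beta> * m) - X powr (- \<beta> * m))"
    using Xpos by (simp add: sinh_field_def powr_def k_def)
  then have "(1/2) * (X powr (\<beta> * m) - X powr (- \<beta> * m)) \<le> L \<rho>2 / L \<rho>1" using fin by linarith
  then show ?thesis by (simp only: Let_def \<beta>_def[symmetric] A_def[symmetric] X_def[symmetric])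
qed

end
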